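(* Let $\psi\colon\mathbb R^d\to\mathbb R\cup\{+\infty\}$ be a lower semi-continuous convex function with $u\in\operatorname{dom}\psi$. Set $f=e^{-\psi}$ and $\bar u=(u,f(u))$. Let $\bar v=(v,\nu)\in\mathbb R^d\times\mathbb R$ with $\nu\ne0$. Then the following are equivalent: (1) $\bar v\in N_{\mathrm{lift}(f)}(\bar u)$ and $\langle\bar u,\bar v\rangle=1$; (2) there is $p\in\partial\psi(u)$ with $1+\langle p,u\rangle>0$ and $\bar v=\dfrac{(p,1/f(u))}{1+\langle p,u\rangle}$.
   Context: $\operatorname{dom}\psi=\{x:\psi(x)<\infty\}$; $\partial\psi(u)=\{p:\psi(y)\ge\psi(u)+\langle p,y-u\rangle\ \forall y\}$. $\operatorname{supp}f=\{x:f(x)>0\}$. Lifting $\mathrm{lift}(f)=\{(x,y)\in\mathbb R^d\times\mathbb R:x\in\overline{\operatorname{supp}f},|y|\le f(x)\}$. Fréchet normal cone $N_A(a_0)=\{w:\forall\varepsilon>0\,\exists\delta>0:\langle w,a-a_0\rangle\le\varepsilon|a-a_0|\ \forall a\in A,|a-a_0|\le\delta\}$. *)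

theory Defs
  imports "HOL-Analysis.Analysis" "HOL-Library.Extended_Real"
begin

text \<open>Functions psi : R^d -> R \<union> {+\<infinity>} are modelled as maps into ereal never taking the value -\<infinity>.\<close>

definition proper_valued :: "('a \<Rightarrow> ereal) \<Rightarrow> bool" where
  "proper_valued \<psi> \<longleftrightarrow> (\<forall>x. \<psi> x \<noteq> -\<infinity>)"

definition econvex :: "('a::real_vector \<Rightarrow> ereal) \<Rightarrow> bool" where
  "econvex \<psi> \<longleftrightarrow> (\<forall>x y t. 0 \<le> t \<and> t \<le> 1 \<longrightarrow>
      \<psi> ((1 - t) *\<^sub>R x + t *\<^sub>R y) \<le> ereal (1 - t) * \<psi> x + ereal t * \<psi> y)"

definition lsc :: "('a::topological_space \<Rightarrow> ereal) \<Rightarrow> bool" where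
  "lsc \<psi> \<longleftrightarrow> (\<forall>x. \<psi> x \<le> Liminf (at x) \<psi>)"

definition edom :: "('a \<Rightarrow> ereal) \<Rightarrow> 'a set" where
  "edom \<psi> = {x. \<psi> x < \<infinity>}"

definition subdiff :: "('a::real_inner \<Rightarrow> ereal) \<Rightarrow> 'a \<Rightarrow> 'a set" where
  "subdiff \<psi> u = {p. \<forall>y. \<psi> y \<ge> \<psi> u + ereal (p \<bullet> (y - u))}"

definition expneg :: "('a \<Rightarrow> ereal) \<Rightarrow> 'a \<Rightarrow> real" where
  "expneg \<psi> x = (if \<psi> x = \<infinity> then 0 else exp (- real_of_ereal (\<psi> x)))"

definition supp :: "('a \<Rightarrow> real) \<Rightarrow> 'a set" where
  "supp f = {x. f x > 0}"

definition lift :: "('a::topological_space \<Rightarrow> real) \<Rightarrow> ('a \<times> real) set" where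
  "lift f = {(x, y). x \<in> closure (supp f) \<and> \<bar>y\<bar> \<le> f x}"

definition normal_cone :: "'a::real_inner set \<Rightarrow> 'a \<Rightarrow> 'a set" where
  "normal_cone A a0 = {w. \<forall>\<epsilon>>0. \<exists>\<delta>>0. \<forall>a\<in>A. norm (a - a0) \<le> \<delta> \<longrightarrow>
      w \<bullet> (a - a0) \<le> \<epsilon> * norm (a - a0)}"

end

theory Submission
  imports Defs
begin

lemma exp_le_quad:
  fixes s :: real assumes "\<bar>s\<bar> \<le> 1"
  shows "exp s \<le> 1 + s + s\<^sup>2"
proof (cases "s \<ge> 0")
  case True thus ?thesis using exp_bound[of s] assms by auto
next
  case False
  define a where "a = - s"
  have a: "0 < a" "a \<le> 1" using False assms by (auto simp: a_def)
  have "1 + a \<le> exp a" by (rule exp_ge_add_one_self)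
  have e: "exp s = 1 / exp a" by (simp add: a_def exp_minus field_simps)
  have "1 / exp a \<le> 1 / (1 + a)" using \<open>1 + a \<le> exp a\<close> a by (simp add: frac_le)
  also have "\<dots> \<le> 1 - a + a\<^sup>2"
  proof -
    have "(1 - a + a\<^sup>2) * (1 + a) = 1 + a^3" by (simp add: algebra_simps power2_eq_square power3_eq_cube)
    moreover have "0 \<le> a^3" using a by simp
    ultimately have "1 \<le> (1 - a + a\<^sup>2) * (1 + a)" by simp
    thus ?thesis using a by (simp add: divide_le_eq)
  qed
  finally show ?thesis using e by (simp add: a_def)
qed

lemma exp_sub1_abs:
  fixes s :: real assumes "\<bar>s\<bar> \<le> 1"
  shows "\<bar>exp s - 1\<bar> \<le> 2 * \<bar>s\<bar>"
proof -
  show ?thesis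
  proof (cases "s \<ge> 0")
    case True
    have "exp s \<le> 1 + s + s\<^sup>2" by (rule exp_le_quad[OF assms])
    moreover have "s\<^sup>2 \<le> s" using assms True by (simp add: power2_eq_square mult_left_le)
    moreover have "1 + s \<le> exp s" by (rule exp_ge_add_one_self)
    ultimately have h1: "\<bar>exp s - 1\<bar> = exp s - 1" and h2: "exp s - 1 \<le> 2 * s" using True by auto
    have h3: "\<bar>s\<bar> = s" using True by simp
    show ?thesis unfolding h1 h3 using h2 by linarith
  next
    case False
    have "exp s \<le> 1" using False by simp
    moreover have "1 + s \<le> exp s" by (rule exp_ge_add_one_self)
    ultimately have h1: "\<bar>exp s - 1\<bar> = 1 - exp s" and h2: "1 - exp s \<le> 2 * (- s)" using False by linarith+
    have h3: "\<bar>s\<bar> = - s" using False by simp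
    show ?thesis unfolding h1 h3 using h2 by linarith
  qed
qed

theorem mainTheorem8:
  fixes \<psi> :: "'a::euclidean_space \<Rightarrow> ereal" and u v :: 'a and \<nu> :: real
  assumes "proper_valued \<psi>" and "lsc \<psi>" and "econvex \<psi>"
    and "u \<in> edom \<psi>"
    and "\<nu> \<noteq> 0"
  shows "((v, \<nu>) \<in> normal_cone (lift (expneg \<psi>)) (u, expneg \<psi> u)
            \<and> (u, expneg \<psi> u) \<bullet> (v, \<nu>) = 1)
     \<longleftrightarrow> (\<exists>p \<in> subdiff \<psi> u. 1 + p \<bullet> u > 0 \<and>
            (v, \<nu>) = (1 / (1 + p \<bullet> u)) *\<^sub>R (p, 1 / expneg \<psi> u))"
proof -
  define F where "F = expneg \<psi>"
  have fin: "\<psi> x \<noteq> - \<infinity>" for x using assms(1) unfolding proper_valued_def by blast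
  have uinf: "\<psi> u \<noteq> \<infinity>" using assms(4) unfolding edom_def by auto
  obtain r where r: "\<psi> u = ereal r"
    using fin[of u] uinf by (cases "\<psi> u") auto
  define fu where "fu = F u"
  have fu: "fu = exp (- r)" using r by (simp add: fu_def F_def expneg_def)
  have fu_pos: "fu > 0" using fu by simp
  have Fnn: "F x \<ge> 0" for x by (simp add: F_def expneg_def)
  have Fbound: "F x \<le> fu * exp (- (p \<bullet> (x - u)))" if p: "p \<in> subdiff \<psi> u" for p x
  proof (cases "\<psi> x = \<infinity>")
    case True thus ?thesis using fu_pos by (simp add: F_def expneg_def)
  next
    case False
    then obtain s where s: "\<psi> x = ereal s" using fin[of x]
      by (cases "\<psi> x") auto
    have "\<psi> x \<ge> \<psi> u + ereal (p \<bullet> (x - u))" using p unfolding subdiff_def by blast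
    hence "ereal s \<ge> ereal r + ereal (p \<bullet> (x - u))" using s r by simp
    hence "s \<ge> r + p \<bullet> (x - u)" by simp
    hence "exp (- s) \<le> exp (- r - p \<bullet> (x - u))" by simp
    moreover have "exp (- r - p \<bullet> (x - u)) = fu * exp (- (p \<bullet> (x - u)))"
      using fu by (simp add: exp_add[symmetric])
    ultimately show ?thesis using s by (simp add: F_def expneg_def)
  qed
  show ?thesis
  proof
    assume H: "(v, \<nu>) \<in> normal_cone (lift (expneg \<psi>)) (u, expneg \<psi> u)
            \<and> (u, expneg \<psi> u) \<bullet> (v, \<nu>) = 1"
    have N: "\<And>\<epsilon>. \<epsilon> > 0 \<Longrightarrow> \<exists>\<delta>>0. \<forall>a\<in>lift F. norm (a - (u, fu)) \<le> \<delta> \<longrightarrow>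
      (v, \<nu>) \<bullet> (a - (u, fu)) \<le> \<epsilon> * norm (a - (u, fu))"
      using H unfolding normal_cone_def F_def fu_def by blast
    have I: "u \<bullet> v + fu * \<nu> = 1" using H by (simp add: F_def fu_def mult.commute)
    have "u \<in> supp F" using fu_pos by (simp add: supp_def fu_def)
    hence usupp: "u \<in> closure (supp F)" using closure_subset by blast
    have nu_pos: "\<nu> > 0"
    proof (rule ccontr)
      assume "\<not> \<nu> > 0"
      hence nn: "\<nu> < 0" using assms(5) by simp
      obtain \<delta> where d: "\<delta> > 0" and dd: "\<forall>a\<in>lift F. norm (a - (u, fu)) \<le> \<delta> \<longrightarrow>
        (v, \<nu>) \<bullet> (a - (u, fu)) \<le> (- \<nu> / 2) * norm (a - (u, fu))"
        using N[of "- \<nu> / 2"] nn by auto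
      define h where "h = min \<delta> fu"
      have h: "h > 0" "h \<le> \<delta>" "h \<le> fu" using d fu_pos by (auto simp: h_def)
      have "(u, fu - h) \<in> lift F" using usupp h by (simp add: lift_def fu_def)
      moreover have eq: "(u, fu - h) - (u, fu) = (0, - h)" by simp
      moreover have nh: "norm ((0::'a, - h)) = h" using h by simp
      ultimately have "(v, \<nu>) \<bullet> (0, - h) \<le> (- \<nu> / 2) * norm ((0::'a, - h))"
        using dd h(2) by (metis)
      hence "- \<nu> * h \<le> (- \<nu> / 2) * h" using nh by simp
      thus False using h nn by (simp add: mult_le_cancel_right)
    qed
    define c where "c = \<nu> * fu"
    have c_pos: "c > 0" using nu_pos fu_pos by (simp add: c_def)
    define p where "p = (1 / c) *\<^sub>R v"
    have vp: "v = c *\<^sub>R p" using c_pos by (simp add: p_def)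
    have uv: "u \<bullet> v = 1 - c" using I by (simp add: c_def mult.commute)
    have "p \<bullet> u = (u \<bullet> v) / c" by (simp add: p_def inner_commute)
    hence pu: "1 + p \<bullet> u = 1 / c" using uv c_pos by (simp add: field_simps)
    have psub: "p \<in> subdiff \<psi> u"
      unfolding subdiff_def
    proof (safe)
      fix y
      show "\<psi> u + ereal (p \<bullet> (y - u)) \<le> \<psi> y"
      proof (rule ccontr)
        assume "\<not> ?thesis"
        hence lt: "\<psi> y < ereal (r + p \<bullet> (y - u))" using r by simp
        then obtain s where s: "\<psi> y = ereal s" using fin[of y]
          by (cases "\<psi> y") auto
        define d where "d = y - u"
        define \<delta>0 where "\<delta>0 = r + p \<bullet> d - s"
        have d0: "\<delta>0 > 0" using lt s by (simp add: \<delta>0_def d_def)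
        define \<sigma> where "\<sigma> = \<delta>0 - p \<bullet> d"
        define K where "K = norm d + 2 * fu * \<bar>\<sigma>\<bar> + 1"
        have K: "K > 0" using fu_pos by (simp add: K_def add_nonneg_pos)
        define \<epsilon> where "\<epsilon> = c * \<delta>0 / (2 * K)"
        have e: "\<epsilon> > 0" using c_pos d0 K by (simp add: \<epsilon>_def)
        obtain \<delta> where dl: "\<delta> > 0" and dd: "\<forall>a\<in>lift F. norm (a - (u, fu)) \<le> \<delta> \<longrightarrow>
          (v, \<nu>) \<bullet> (a - (u, fu)) \<le> \<epsilon> * norm (a - (u, fu))"
          using N[OF e] by auto
        define t where "t = min 1 (min (1 / (\<bar>\<sigma>\<bar> + 1)) (\<delta> / K))"
        have t: "t > 0" "t \<le> 1" "t \<le> 1 / (\<bar>\<sigma>\<bar> + 1)" "t \<le> \<delta> / K"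
          using dl K by (auto simp: t_def)
        have ts: "\<bar>t * \<sigma>\<bar> \<le> 1"
        proof -
          have "t * (\<bar>\<sigma>\<bar> + 1) \<le> 1" using t by (simp add: le_divide_eq)
          thus ?thesis using t by (simp add: abs_mult algebra_simps)
        qed
        define x where "x = u + t *\<^sub>R d"
        define yt where "yt = fu * exp (t * \<sigma>)"
        have xe: "(1 - t) *\<^sub>R u + t *\<^sub>R y = x" by (simp add: x_def d_def algebra_simps)
        have conv: "\<psi> x \<le> ereal (1 - t) * \<psi> u + ereal t * \<psi> y"
        proof -
          have cv: "\<And>x y t. 0 \<le> t \<Longrightarrow> t \<le> 1 \<Longrightarrow> \<psi> ((1 - t) *\<^sub>R x + t *\<^sub>R y) \<le> ereal (1 - t) * \<psi> x + ereal t * \<psi> y"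
            using assms(3) unfolding econvex_def by blast
          have "0 \<le> t" using t(1) by simp
          from cv[OF this t(2), of u y] show ?thesis unfolding xe .
        qed
        have "ereal (1 - t) * \<psi> u + ereal t * \<psi> y = ereal ((1 - t) * r + t * s)"
          unfolding r s by (simp only: times_ereal.simps plus_ereal.simps)
        hence "\<psi> x \<le> ereal ((1 - t) * r + t * s)" using conv by (simp only:)
        then obtain w where w: "\<psi> x = ereal w" "w \<le> (1 - t) * r + t * s"
          using fin[of x] by (cases "\<psi> x") auto
        have Fx: "F x = exp (- w)" using w by (simp add: F_def expneg_def)
        have "- w \<ge> - r + t * \<sigma>"
          using w(2) by (simp add: \<sigma>_def \<delta>0_def algebra_simps)
        hence "yt \<le> F x" using Fx fu by (simp add: yt_def exp_add[symmetric])
        moreover have "yt > 0" using fu_pos by (simp add: yt_def)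
        ultimately have "x \<in> supp F" "\<bar>yt\<bar> \<le> F x" by (auto simp: supp_def)
        hence inlift: "(x, yt) \<in> lift F"
          using closure_subset[of "supp F"] by (auto simp: lift_def)
        have diff: "(x, yt) - (u, fu) = (t *\<^sub>R d, fu * (exp (t * \<sigma>) - 1))"
          by (simp add: x_def yt_def algebra_simps)
        have nb: "norm ((x, yt) - (u, fu)) \<le> t * K"
        proof -
          have "norm ((x, yt) - (u, fu)) \<le> norm (t *\<^sub>R d) + norm (fu * (exp (t * \<sigma>) - 1))"
            unfolding diff by (rule norm_Pair_le)
          also have "\<dots> = t * norm d + fu * \<bar>exp (t * \<sigma>) - 1\<bar>"
            using t fu_pos by (simp add: abs_mult)
          also have "\<dots> \<le> t * norm d + fu * (2 * \<bar>t * \<sigma>\<bar>)"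
            using exp_sub1_abs[OF ts] fu_pos by (simp add: mult_left_mono)
          also have "\<dots> \<le> t * K" using t fu_pos by (simp add: K_def abs_mult algebra_simps)
          finally show ?thesis .
        qed
        also have "t * K \<le> \<delta>" using t K by (simp add: le_divide_eq)
        finally have "(v, \<nu>) \<bullet> ((x, yt) - (u, fu)) \<le> \<epsilon> * norm ((x, yt) - (u, fu))"
          using dd inlift by blast
        also have "\<dots> \<le> \<epsilon> * (t * K)" using nb e by (simp add: mult_left_mono)
        finally have ineq: "(v, \<nu>) \<bullet> ((x, yt) - (u, fu)) \<le> \<epsilon> * (t * K)" .
        have "(v, \<nu>) \<bullet> ((x, yt) - (u, fu)) = c * (t * (p \<bullet> d)) + \<nu> * fu * (exp (t * \<sigma>) - 1)"
          unfolding diff by (simp add: vp)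
        also have "\<dots> = c * (t * (p \<bullet> d) + (exp (t * \<sigma>) - 1))" by (simp add: c_def algebra_simps)
        also have "\<dots> \<ge> c * (t * \<delta>0)"
        proof -
          have "1 + t * \<sigma> \<le> exp (t * \<sigma>)" by (rule exp_ge_add_one_self)
          hence "t * \<delta>0 \<le> t * (p \<bullet> d) + (exp (t * \<sigma>) - 1)" by (simp add: \<sigma>_def algebra_simps)
          thus ?thesis using c_pos by (simp add: mult_left_mono)
        qed
        finally have "c * (t * \<delta>0) \<le> \<epsilon> * (t * K)" using ineq by linarith
        also have "\<epsilon> * (t * K) = c * (t * \<delta>0) / 2" using K by (simp add: \<epsilon>_def field_simps)
        finally show False using c_pos t d0 by simp
      qed
    qed
    show "\<exists>p \<in> subdiff \<psi> u. 1 + p \<bullet> u > 0 \<and>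
            (v, \<nu>) = (1 / (1 + p \<bullet> u)) *\<^sub>R (p, 1 / expneg \<psi> u)"
    proof (intro bexI[OF _ psub] conjI)
      show "1 + p \<bullet> u > 0" using pu c_pos by simp
      show "(v, \<nu>) = (1 / (1 + p \<bullet> u)) *\<^sub>R (p, 1 / expneg \<psi> u)"
        using pu vp fu_pos by (simp add: c_def F_def[symmetric] fu_def[symmetric])
    qed
  next
    assume "\<exists>p \<in> subdiff \<psi> u. 1 + p \<bullet> u > 0 \<and>
            (v, \<nu>) = (1 / (1 + p \<bullet> u)) *\<^sub>R (p, 1 / expneg \<psi> u)"
    then obtain p where p: "p \<in> subdiff \<psi> u" and c: "1 + p \<bullet> u > 0"
      and vn: "(v, \<nu>) = (1 / (1 + p \<bullet> u)) *\<^sub>R (p, 1 / fu)"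
      by (auto simp: fu_def F_def)
    define c where "c = 1 + p \<bullet> u"
    have cp: "c > 0" using c by (simp add: c_def)
    have v: "v = (1 / c) *\<^sub>R p" and nu: "\<nu> = 1 / (c * fu)" using vn by (auto simp: c_def)
    have e1: "u \<bullet> v = (p \<bullet> u) / c" by (simp add: v inner_commute)
    have e2: "fu * \<nu> = 1 / c" using fu_pos by (simp add: nu)
    have "u \<bullet> v + fu * \<nu> = (1 + p \<bullet> u) / c" unfolding e1 e2 by (simp add: add_divide_distrib)
    also have "\<dots> = 1" using cp by (simp add: c_def)
    finally have inner1: "(u, expneg \<psi> u) \<bullet> (v, \<nu>) = 1" by (simp add: F_def[symmetric] fu_def[symmetric])
    have "(v, \<nu>) \<in> normal_cone (lift F) (u, fu)"
      unfolding normal_cone_def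
    proof (safe)
      fix \<epsilon> :: real assume e: "\<epsilon> > 0"
      define \<delta> where "\<delta> = min (1 / (norm p + 1)) (\<epsilon> * c / ((norm p)\<^sup>2 + 1))"
      have dpos: "\<delta> > 0" using e cp by (simp add: \<delta>_def add_nonneg_pos)
      show "\<exists>\<delta>>0. \<forall>a\<in>lift F. norm (a - (u, fu)) \<le> \<delta> \<longrightarrow> (v, \<nu>) \<bullet> (a - (u, fu)) \<le> \<epsilon> * norm (a - (u, fu))"
      proof (intro exI[of _ \<delta>] conjI ballI impI dpos)
        fix a assume a: "a \<in> lift F" and an: "norm (a - (u, fu)) \<le> \<delta>"
        obtain x y where axy: "a = (x, y)" by (cases a)
        have yF: "y \<le> F x" using a axy by (auto simp: lift_def)
        define n where "n = norm (a - (u, fu))"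
        have nx: "norm (x - u) \<le> n" using norm_fst_le[of "x - u" "y - fu"] by (simp add: n_def axy)
        define t where "t = p \<bullet> (x - u)"
        have tn: "\<bar>t\<bar> \<le> norm p * n"
          using Cauchy_Schwarz_ineq2[of p "x - u"] nx
          by (simp add: t_def) (meson mult_left_mono norm_ge_zero order_trans)
        have n\<delta>: "n \<le> \<delta>" using an by (simp add: n_def)
        have t1: "\<bar>t\<bar> \<le> 1"
        proof -
          have "norm p * n \<le> norm p * (1 / (norm p + 1))"
            using n\<delta> by (intro mult_left_mono) (auto simp: \<delta>_def)
          also have "\<dots> \<le> 1"
          proof -
            have pos: "norm p + 1 > 0" by (simp add: add_nonneg_pos)
            show ?thesis using pos by (simp add: field_simps)
          qed
          finally show ?thesis using tn by linarith
        qed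
        have "(v, \<nu>) \<bullet> (a - (u, fu)) = (1 / c) * (t + (y - fu) / fu)"
          using fu_pos cp by (simp add: axy v nu t_def field_simps)
        also have "\<dots> \<le> (1 / c) * (t + exp (- t) - 1)"
        proof -
          have "y \<le> fu * exp (- t)" using yF Fbound[OF p, of x] by (simp add: t_def)
          hence "y / fu \<le> exp (- t)" using fu_pos by (simp add: divide_le_eq mult.commute)
          moreover have "(y - fu) / fu = y / fu - 1" using fu_pos by (simp add: diff_divide_distrib)
          ultimately have "(y - fu) / fu \<le> exp (- t) - 1" by linarith
          thus ?thesis using cp by (intro mult_left_mono) auto
        qed
        also have "\<dots> \<le> (1 / c) * t\<^sup>2"
          using exp_le_quad[of "- t"] t1 cp by (intro mult_left_mono) auto
        also have "\<dots> \<le> (1 / c) * ((norm p)\<^sup>2 * n\<^sup>2)"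
        proof -
          have "t\<^sup>2 \<le> (norm p * n)\<^sup>2" using tn by (metis abs_ge_zero power2_abs power_mono)
          thus ?thesis using cp by (intro mult_left_mono) (auto simp: power_mult_distrib)
        qed
        also have "\<dots> \<le> \<epsilon> * n"
        proof -
          have n0: "n \<ge> 0" by (simp add: n_def)
          have "(norm p)\<^sup>2 * n \<le> ((norm p)\<^sup>2 + 1) * (\<epsilon> * c / ((norm p)\<^sup>2 + 1))"
            using n\<delta> n0 by (intro mult_mono) (auto simp: \<delta>_def)
          also have "\<dots> = \<epsilon> * c"
          proof -
            have "(norm p)\<^sup>2 + 1 > 0" by (simp add: add_nonneg_pos)
            thus ?thesis by simp
          qed
          finally have "(norm p)\<^sup>2 * n \<le> \<epsilon> * c" .
          hence "(norm p)\<^sup>2 * n * n \<le> \<epsilon> * c * n" using n0 by (simp add: mult_right_mono)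
          thus ?thesis using cp by (simp add: power2_eq_square field_simps)
        qed
        finally show "(v, \<nu>) \<bullet> (a - (u, fu)) \<le> \<epsilon> * norm (a - (u, fu))" by (simp add: n_def)
      qed
    qed
    thus "(v, \<nu>) \<in> normal_cone (lift (expneg \<psi>)) (u, expneg \<psi> u)
            \<and> (u, expneg \<psi> u) \<bullet> (v, \<nu>) = 1"
      using inner1 by (simp add: F_def fu_def)
  qed
qed

end
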